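(* Let $L\in(0,\infty)$ and for $k\in\mathbb{N}$ put $n_k:=\lfloor (k/L)^2\rfloor$. Then for every $x\in F(1/2,1)$ there is $k_0=k_0(x)$ such that for every $k\ge k_0$ there exists an integer $j_k$ with $n_{k-1}<j_k\le n_k$ and $T_{n_k}(x)=a_{j_k}(x)$.
   Context: Every $x\in(0,1)\setminus\mathbb{Q}$ has a unique infinite continued fraction expansion $x=[a_1(x),a_2(x),\dots]$ with partial quotients $a_i(x)\in\mathbb{N}=\{1,2,\dots\}$. For $n\in\mathbb{N}$ let $T_n(x):=\max\{a_k(x):1\le k\le n\}$. Define $$F(1/2,1):=\Big\{x\in(0,1)\setminus\mathbb{Q}:\ \lim_{n\to\infty}\frac{T_n(x)}{e^{\sqrt{n}}}=1\Big\}.$$ *)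

theory Defs
  imports Complex_Main
begin

definition gauss_map :: "real \<Rightarrow> real" where
  "gauss_map x = frac (1 / x)"

definition cf_a :: "nat \<Rightarrow> real \<Rightarrow> nat" where
  "cf_a n x = nat \<lfloor>1 / (gauss_map ^^ (n - 1)) x\<rfloor>"

definition cf_T :: "nat \<Rightarrow> real \<Rightarrow> nat" where
  "cf_T n x = Max ((\<lambda>k. cf_a k x) ` {1..n})"

definition F_half_one :: "real set" where
  "F_half_one = {x. x \<in> {0<..<1} \<and> x \<notin> \<rat> \<and>
     ((\<lambda>n. real (cf_T n x) / exp (sqrt (real n))) \<longlonglongrightarrow> 1)}"

definition n_seq :: "real \<Rightarrow> nat \<Rightarrow> nat" where
  "n_seq L k = nat \<lfloor>(real k / L)^2\<rfloor>"

end

theory Submission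
  imports Defs
begin

lemma n_seq_upper: "L > 0 \<Longrightarrow> real (n_seq L k) \<le> (real k / L)^2"
  unfolding n_seq_def by simp

lemma n_seq_lower: "L > 0 \<Longrightarrow> real (n_seq L k) \<ge> (real k / L)^2 - 1"
  unfolding n_seq_def by linarith

lemma n_seq_mono: "L > 0 \<Longrightarrow> m \<le> k \<Longrightarrow> n_seq L m \<le> n_seq L k"
  unfolding n_seq_def
  by (intro nat_mono floor_mono power_mono divide_right_mono) auto

lemma n_seq_at_top:
  assumes "L > 0" shows "filterlim (n_seq L) at_top sequentially"
proof (subst filterlim_at_top, intro allI)
  fix Z :: nat
  have "eventually (\<lambda>k. k \<ge> nat \<lceil>L * (real Z + 1)\<rceil>) sequentially"
    by (rule eventually_ge_at_top)
  then show "eventually (\<lambda>k. Z \<le> n_seq L k) sequentially"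
  proof (rule eventually_mono)
    fix k assume "k \<ge> nat \<lceil>L * (real Z + 1)\<rceil>"
    then have "real k \<ge> L * (real Z + 1)" by linarith
    then have y: "real k / L \<ge> real Z + 1" using assms by (simp add: field_simps)
    then have "(real k / L)^2 \<ge> real k / L"
      by (smt (verit) of_nat_0_le_iff power2_eq_square mult_le_cancel_left1)
    then have "real (n_seq L k) \<ge> real Z" using n_seq_lower[OF assms, of k] y by linarith
    then show "Z \<le> n_seq L k" by simp
  qed
qed

lemma sqrt_gap:
  assumes L: "L > 0" and m1: "real m + 1 \<ge> L" and m2: "real m + 1 \<ge> 2 * L^2"
  shows "sqrt (real (n_seq L (Suc m))) - sqrt (real (n_seq L m)) \<ge> 1 / (2*L)"
proof -
  define y where "y = (real m + 1) / L"
  have y1: "y \<ge> 1" using m1 L by (simp add: y_def field_simps)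
  have y2: "y \<ge> 2 * L" using m2 L by (simp add: y_def field_simps power2_eq_square)
  have "(y - 1/y)^2 = y^2 - 2 + 1/y^2" using y1 by (simp add: power2_eq_square field_simps)
  also have "\<dots> \<le> y^2 - 1" using y1
    by (simp add: power_le_one_iff)
  also have "\<dots> \<le> real (n_seq L (Suc m))" using n_seq_lower[OF L, of "Suc m"] by (simp add: y_def add.commute)
  finally have "y - 1/y \<le> sqrt (real (n_seq L (Suc m)))"
    using y1 by (intro real_le_rsqrt) auto
  moreover have "sqrt (real (n_seq L m)) \<le> real m / L"
  proof -
    have "sqrt (real (n_seq L m)) \<le> sqrt ((real m / L)^2)"
      using n_seq_upper[OF L] real_sqrt_le_mono by blast
    also have "\<dots> = real m / L" using L by simp
    finally show ?thesis .
  qed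
  moreover have "y - real m / L = 1 / L" using L by (simp add: y_def field_simps)
  moreover have "1/y \<le> 1/(2*L)" using y2 L by (simp add: frac_le)
  moreover have "1/L - 1/(2*L) = 1/(2*L)" using L by simp
  ultimately show ?thesis by linarith
qed

lemma cf_T_step:
  assumes "1 \<le> a" "a \<le> b" "cf_T a x < cf_T b x"
  shows "\<exists>j. a < j \<and> j \<le> b \<and> cf_T b x = cf_a j x"
proof -
  have ne: "{1..b} \<noteq> {}" using assms by auto
  have "cf_T b x \<in> (\<lambda>k. cf_a k x) ` {1..b}"
    unfolding cf_T_def using ne by (intro Max_in) auto
  then obtain j where j: "j \<in> {1..b}" "cf_T b x = cf_a j x" by auto
  have "a < j"
  proof (rule ccontr)
    assume "\<not> a < j"
    then have "j \<in> {1..a}" using j by auto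
    then have "cf_a j x \<le> cf_T a x" unfolding cf_T_def by (intro Max_ge) auto
    then show False using j assms by simp
  qed
  then show ?thesis using j by auto
qed

theorem lemma1:
  fixes L :: real
  assumes "L > 0"
  shows "\<forall>x \<in> F_half_one. \<exists>k0. \<forall>k \<ge> k0. \<exists>j.
           n_seq L (k - 1) < j \<and> j \<le> n_seq L k \<and> cf_T (n_seq L k) x = cf_a j x"
proof
  fix x assume "x \<in> F_half_one"
  then have lim: "(\<lambda>n. real (cf_T n x) / exp (sqrt (real n))) \<longlonglongrightarrow> 1"
    unfolding F_half_one_def by auto
  define t where "t n = real (cf_T n x)" for n
  define e where "e n = exp (sqrt (real n))" for n
  define A where "A m = t (n_seq L (Suc m)) / e (n_seq L (Suc m))" for m
  define B where "B m = t (n_seq L m) / e (n_seq L m)" for m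
  define q where "q = exp (1 / (2*L))"
  have q1: "q > 1" using assms by (simp add: q_def)
  have B: "B \<longlonglongrightarrow> 1" unfolding B_def t_def e_def
    using filterlim_compose[OF lim n_seq_at_top[OF assms]] by simp
  have A: "A \<longlonglongrightarrow> 1" unfolding A_def
    using B unfolding B_def by (rule LIMSEQ_Suc)
  have "(\<lambda>m. A m * q / B m) \<longlonglongrightarrow> 1 * q / 1"
    by (intro tendsto_intros A B) simp
  then have ev1: "eventually (\<lambda>m. A m * q / B m > 1) sequentially"
    using q1 by (intro order_tendstoD) simp_all
  have ev2: "eventually (\<lambda>m. B m > 0) sequentially"
    using order_tendstoD(1)[OF B, of 0] by simp
  have ev3: "eventually (\<lambda>m. A m > 0) sequentially"
    using order_tendstoD(1)[OF A, of 0] by simp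
  have ev4: "eventually (\<lambda>m. m \<ge> nat \<lceil>L\<rceil> + nat \<lceil>2*L^2\<rceil> + 1) sequentially"
    by (rule eventually_ge_at_top)
  have ev5: "eventually (\<lambda>m. n_seq L m \<ge> 1) sequentially"
    using n_seq_at_top[OF assms] by (simp add: filterlim_at_top)
  have "eventually (\<lambda>m. \<exists>j. n_seq L m < j \<and> j \<le> n_seq L (Suc m) \<and>
           cf_T (n_seq L (Suc m)) x = cf_a j x) sequentially"
    using ev1 ev2 ev3 ev4 ev5
  proof eventually_elim
    case (elim m)
    have m1: "real m + 1 \<ge> L" and m2: "real m + 1 \<ge> 2*L^2" using elim(4) by linarith+
    have gap: "sqrt (real (n_seq L (Suc m))) \<ge> sqrt (real (n_seq L m)) + 1/(2*L)"
      using sqrt_gap[OF assms m1 m2] by linarith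
    have ee: "e (n_seq L (Suc m)) \<ge> q * e (n_seq L m)"
      unfolding e_def q_def using gap by (simp add: exp_add[symmetric])
    have epos: "e n > 0" for n by (simp add: e_def)
    have tA: "t (n_seq L (Suc m)) = A m * e (n_seq L (Suc m))"
      using epos[of "n_seq L (Suc m)"] unfolding A_def by simp
    have tB: "t (n_seq L m) = B m * e (n_seq L m)"
      using epos[of "n_seq L m"] unfolding B_def by simp
    have "A m * q > B m" using elim(1,2) by (simp add: field_simps)
    then have "t (n_seq L m) < A m * q * e (n_seq L m)"
      using tB epos[of "n_seq L m"] by simp
    also have "\<dots> \<le> A m * e (n_seq L (Suc m))"
      using ee elim(3) by (simp add: mult.assoc)
    finally have "t (n_seq L m) < t (n_seq L (Suc m))" using tA by simp
    then have "cf_T (n_seq L m) x < cf_T (n_seq L (Suc m)) x" by (simp add: t_def)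
    then show ?case
      using cf_T_step[OF elim(5) n_seq_mono[OF assms]] by simp
  qed
  then obtain m0 where m0: "\<And>m. m \<ge> m0 \<Longrightarrow> \<exists>j. n_seq L m < j \<and> j \<le> n_seq L (Suc m) \<and>
           cf_T (n_seq L (Suc m)) x = cf_a j x"
    unfolding eventually_sequentially by blast
  show "\<exists>k0. \<forall>k \<ge> k0. \<exists>j. n_seq L (k - 1) < j \<and> j \<le> n_seq L k \<and> cf_T (n_seq L k) x = cf_a j x"
  proof (rule exI[of _ "Suc m0"], intro allI impI)
    fix k assume "k \<ge> Suc m0"
    then obtain m where "k = Suc m" "m \<ge> m0" by (cases k) auto
    then show "\<exists>j. n_seq L (k - 1) < j \<and> j \<le> n_seq L k \<and> cf_T (n_seq L k) x = cf_a j x"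
      using m0 by simp
  qed
qed

end
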